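(* Let $\mathcal{F}$ be a set of probability distributions on $\Theta$, and suppose there exist $\epsilon_n>0$ and $\rho_n\in\mathcal{F}$ such that (i) $\int \mathcal{K}(P^{(n)}_{\theta_0},P^{(n)}_{\theta})\,\rho_n(d\theta)=\int \mathrm{E}[r_n(\theta,\theta_0)]\,\rho_n(d\theta)\le n\epsilon_n$; (ii) $\int \mathrm{Var}(r_n(\theta,\theta_0))\,\rho_n(d\theta)\le n\epsilon_n$; (iii) $\mathcal{K}(\rho_n,\pi)\le n\epsilon_n$. Then for every $\alpha\in(0,1)$ and every $(\epsilon,\eta)\in(0,1)\times(0,1)$, $$P^{(n)}_{\theta_0}\Big[\int D_{\alpha}(P^{(n)}_{\theta},P^{(n)}_{\theta_0})\,\tilde{\pi}_{n,\alpha|X^n}(d\theta)\le \frac{(\alpha+1)n\epsilon_n+\alpha\sqrt{n\epsilon_n/\eta}-\log\epsilon}{1-\alpha}\Big]\ge 1-\epsilon-\eta.$$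
   Context: $\Theta\subseteq\mathbb{R}^d$. For each $\theta\in\Theta$ and $n\ge1$, $P^{(n)}_\theta$ is a probability distribution of $X^n=(X_0,\dots,X_n)$ with density $p^{(n)}_\theta$ with respect to a common dominating measure; the data are distributed as $P^{(n)}_{\theta_0}$, and $\mathrm{E},\mathrm{Var},P$ are taken under $P^{(n)}_{\theta_0}$. $r_n(\theta,\theta_0):=\log\big(p^{(n)}_{\theta_0}(X^n)/p^{(n)}_{\theta}(X^n)\big)$. For $\alpha\in(0,1)$, $D_{\alpha}(P^{(n)}_{\theta},P^{(n)}_{\theta_0}):=\frac{1}{\alpha-1}\log\int \exp(-\alpha r_n(\theta,\theta_0)(x))\,p^{(n)}_{\theta_0}(x)\,dx$ ($\alpha$-Rényi divergence); $\mathcal{K}$ denotes Kullback–Leibler divergence. $\pi$ is a prior on $\Theta$. The fractional (tempered) posterior is $\pi_{n,\alpha|X^n}(d\theta)=e^{-\alpha r_n(\theta,\theta_0)}\pi(d\theta)/\int e^{-\alpha r_n(\gamma,\theta_0)}\pi(d\gamma)$, and its variational approximation is $\tilde\pi_{n,\alpha|X^n}:=\arg\min_{\rho\in\mathcal{F}}\mathcal{K}(\rho,\pi_{n,\alpha|X^n})$, equivalently a minimizer over $\rho\in\mathcal{F}$ of $\alpha\int r_n(\theta,\theta_0)\rho(d\theta)+\mathcal{K}(\rho,\pi)$; it is assumed to exist (elements of $\mathcal F$ are absolutely continuous with respect to $\pi$). *)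

theory Defs
  imports "HOL-Probability.Probability"
begin

text \<open>Extended-valued Kullback-Leibler divergence KL(Q, M) = integral of ln(dQ/dM) w.r.t. Q,
  equal to infinity when Q is not absolutely continuous w.r.t. M or the log-density is not
  Q-integrable (its negative part is always integrable, so this is exactly divergence to infinity).\<close>
definition kl_div :: "'a measure \<Rightarrow> 'a measure \<Rightarrow> ennreal" where
  "kl_div Q M =
     (if sets Q = sets M \<and> absolutely_continuous M Q
         \<and> integrable Q (\<lambda>x. ln (enn2real (RN_deriv M Q x)))
      then ennreal (KL_divergence (exp 1) M Q) else \<infinity>)"

definition llr :: "('p \<Rightarrow> 'x \<Rightarrow> real) \<Rightarrow> 'p \<Rightarrow> 'p \<Rightarrow> 'x \<Rightarrow> real" where
  "llr p \<theta> \<theta>0 x = ln (p \<theta>0 x / p \<theta> x)"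

text \<open>alpha-Renyi divergence D_alpha(P_theta, P_theta0) = 1/(alpha-1) log of the integral of
  exp(-alpha r) p_theta0 d mu, where exp(-alpha r) p_theta0 = p_theta^alpha p_theta0^(1-alpha)
  (with exp(-infinity) = 0); the value is infinity when that integral is 0.\<close>
definition renyi_div :: "'x measure \<Rightarrow> real \<Rightarrow> ('x \<Rightarrow> real) \<Rightarrow> ('x \<Rightarrow> real) \<Rightarrow> ennreal" where
  "renyi_div \<mu> \<alpha> p q =
     (let I = (\<integral>\<^sup>+ x. ennreal (p x powr \<alpha> * q x powr (1 - \<alpha>)) \<partial>\<mu>)
      in if I = 0 then \<infinity> else ennreal (ln (enn2real I) / (\<alpha> - 1)))"

text \<open>Fractional (tempered) posterior given data x:
  density exp(-alpha r_n(theta,theta0)(x)) = (p_theta(x)/p_theta0(x))^alpha w.r.t. the prior, normalised.\<close>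
definition frac_post ::
  "'p measure \<Rightarrow> ('p \<Rightarrow> 'x \<Rightarrow> real) \<Rightarrow> 'p \<Rightarrow> real \<Rightarrow> 'x \<Rightarrow> 'p measure" where
  "frac_post \<pi> p \<theta>0 \<alpha> x =
     density \<pi> (\<lambda>\<theta>. ennreal ((p \<theta> x / p \<theta>0 x) powr \<alpha>) /
                   (\<integral>\<^sup>+ \<gamma>. ennreal ((p \<gamma> x / p \<theta>0 x) powr \<alpha>) \<partial>\<pi>))"

end

theory Submission
  imports Defs
begin


lemma DV_bound:
  fixes M Q :: "'a measure" and g :: "'a \<Rightarrow> real"
  assumes M: "prob_space M" and Q: "prob_space Q" and sQ: "sets Q = sets M"
   and ac: "absolutely_continuous M Q"
   and int: "integrable Q (\<lambda>x. ln (enn2real (RN_deriv M Q x)))"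
   and g[measurable]: "g \<in> borel_measurable M" and g1: "\<And>x. x\<in>space M \<Longrightarrow> 1 \<le> g x"
   and gfin: "(\<integral>\<^sup>+x. ennreal (g x) \<partial>M) < \<infinity>"
  shows "(\<integral>\<^sup>+x. ennreal (ln (g x)) \<partial>Q) \<le> ennreal (KL_divergence (exp 1) M Q + ln (enn2real (\<integral>\<^sup>+x. ennreal (g x) \<partial>M)))"
    and "0 \<le> KL_divergence (exp 1) M Q + ln (enn2real (\<integral>\<^sup>+x. ennreal (g x) \<partial>M))"
proof -
  interpret M: prob_space M by fact
  interpret Q: prob_space Q by fact
  have spQ: "space Q = space M" using sQ by (rule sets_eq_imp_space_eq)
  have mQ: "\<And>h::'a\<Rightarrow>real. h \<in> borel_measurable M \<Longrightarrow> h \<in> borel_measurable Q"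
    by (simp add: measurable_def sQ spQ)
  define f where "f x = enn2real (RN_deriv M Q x)" for x
  have fm[measurable]: "f \<in> borel_measurable M" unfolding f_def by simp
  obtain D where D: "D \<in> borel_measurable M" "AE x in M. RN_deriv M Q x = ennreal (D x)"
    "AE x in Q. 0 < D x" "\<And>x. 0 \<le> D x"
    using M.real_RN_deriv[OF Q.finite_measure_axioms ac sQ] by blast
  have "AE x in Q. RN_deriv M Q x = ennreal (D x)"
    using absolutely_continuous_AE[OF sQ ac D(2)] .
  then have fpos: "AE x in Q. 0 < f x" using D(3)
    by eventually_elim (use D(4) in \<open>auto simp: f_def\<close>)
  have fD: "AE x in M. RN_deriv M Q x = ennreal (f x)" using D(2)
    by eventually_elim (use D(4) in \<open>auto simp: f_def\<close>)
  define c where "c = enn2real (\<integral>\<^sup>+x. ennreal (g x) \<partial>M)"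
  have "(\<integral>\<^sup>+x. ennreal 1 \<partial>M) \<le> (\<integral>\<^sup>+x. ennreal (g x) \<partial>M)"
    by (intro nn_integral_mono) (auto simp: g1)
  then have ge1: "1 \<le> (\<integral>\<^sup>+x. ennreal (g x) \<partial>M)" by (simp add: M.emeasure_space_1)
  have cE: "ennreal c = (\<integral>\<^sup>+x. ennreal (g x) \<partial>M)" unfolding c_def using gfin by (simp add: less_top)
  have c0: "0 \<le> c" by (simp add: c_def)
  have "ennreal 1 \<le> ennreal c" using ge1 cE by simp
  then have c1: "1 \<le> c" using c0 by simp
  have g0: "0 \<le> g x" if "x \<in> space M" for x using g1[OF that] by simp
  have gd0: "0 \<le> g x / (c * f x)" if "x \<in> space M" for x
    using g0[OF that] c0 by (simp add: f_def)
  define h where "h x = ln (f x) + ln c + g x / (c * f x) - 1" for x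
  have pt: "ln (g x) \<le> h x" if "0 < f x" "x \<in> space M" for x
  proof -
    have gp: "0 < g x" using g1[OF that(2)] by simp
    have "ln (g x / (c * f x)) \<le> g x / (c * f x) - 1"
      by (rule ln_le_minus_one) (use gp c1 that in auto)
    moreover have "ln (g x / (c * f x)) = ln (g x) - ln c - ln (f x)"
      using gp c1 that by (simp add: ln_div ln_mult)
    ultimately show ?thesis unfolding h_def by simp
  qed
  have nnq: "(\<integral>\<^sup>+x. ennreal (g x / (c * f x)) \<partial>Q) \<le> 1"
  proof -
    have "(\<integral>\<^sup>+x. ennreal (g x / (c * f x)) \<partial>Q) = (\<integral>\<^sup>+x. RN_deriv M Q x * ennreal (g x / (c * f x)) \<partial>M)"
      by (rule M.RN_deriv_nn_integral[OF ac sQ]) simp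
    also have "\<dots> \<le> (\<integral>\<^sup>+x. ennreal (g x / c) \<partial>M)"
    proof (intro nn_integral_mono_AE)
      show "AE x in M. RN_deriv M Q x * ennreal (g x / (c * f x)) \<le> ennreal (g x / c)"
        using fD
      proof eventually_elim
        case (elim x)
        show ?case
        proof (cases "f x = 0")
          case True then show ?thesis by (simp add: elim)
        next
          case False
          then have "0 < f x" unfolding f_def using enn2real_nonneg[of "RN_deriv M Q x"] by linarith
          have "ennreal (f x) * ennreal (g x / (c * f x)) = ennreal (f x * (g x / (c * f x)))"
            using \<open>0 < f x\<close> by (intro ennreal_mult'[symmetric]) simp
          also have "f x * (g x / (c * f x)) = g x / c" using \<open>0 < f x\<close> c1 by (simp add: field_simps)
          finally show ?thesis by (simp add: elim)
        qed
      qed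
    qed
    also have "\<dots> = (\<integral>\<^sup>+x. ennreal (g x) \<partial>M) / ennreal c"
    proof -
      have "(\<integral>\<^sup>+x. ennreal (g x / c) \<partial>M) = (\<integral>\<^sup>+x. ennreal (g x) / ennreal c \<partial>M)"
      proof (intro nn_integral_cong)
        fix x assume "x \<in> space M"
        then have "0 \<le> g x" using g1 by force
        then show "ennreal (g x / c) = ennreal (g x) / ennreal c"
          using c1 by (intro divide_ennreal[symmetric]) auto
      qed
      also have "\<dots> = (\<integral>\<^sup>+x. ennreal (g x) \<partial>M) / ennreal c"
        by (rule nn_integral_divide) simp
      finally show ?thesis .
    qed
    also have "\<dots> = 1" unfolding cE[symmetric] using c1 by (simp add: divide_ennreal)
    finally show ?thesis .
  qed
  have int2: "integrable Q (\<lambda>x. g x / (c * f x))"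
  proof (intro integrableI_nonneg)
    show "AE x in Q. 0 \<le> g x / (c * f x)"
      using gd0 by (intro AE_I2) (simp add: spQ)
    show "(\<integral>\<^sup>+x. ennreal (g x / (c * f x)) \<partial>Q) < \<infinity>"
      using nnq by (simp add: le_less_trans)
  qed (simp add: mQ)
  have i2le: "(\<integral>x. g x / (c * f x) \<partial>Q) \<le> 1"
  proof -
    have "ennreal (\<integral>x. g x / (c * f x) \<partial>Q) = (\<integral>\<^sup>+x. ennreal (g x / (c * f x)) \<partial>Q)"
      using gd0 by (intro nn_integral_eq_integral[symmetric] int2 AE_I2) (simp add: spQ)
    with nnq have "ennreal (\<integral>x. g x / (c * f x) \<partial>Q) \<le> 1" by simp
    then show ?thesis by simp
  qed
  have inth: "integrable Q h" unfolding h_def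
    using int int2 by (auto simp: f_def)
  have KL: "KL_divergence (exp 1) M Q = (\<integral>x. ln (f x) \<partial>Q)"
    by (simp add: KL_divergence_def entropy_density_def f_def comp_def log_def)
  have ih: "(\<integral>x. h x \<partial>Q) = KL_divergence (exp 1) M Q + ln c + (\<integral>x. g x / (c * f x) \<partial>Q) - 1"
    unfolding h_def KL using int int2 by (simp add: f_def Q.prob_space)
  have aeh: "AE x in Q. ln (g x) \<le> h x" using fpos AE_space
    by eventually_elim (use pt in \<open>auto simp: spQ\<close>)
  have aeh0: "AE x in Q. 0 \<le> h x" using aeh AE_space
  proof eventually_elim
    case (elim x)
    then have "0 \<le> ln (g x)" using g1 by (simp add: spQ)
    then show ?case using elim by linarith
  qed
  have "0 \<le> (\<integral>x. h x \<partial>Q)" using aeh0 by (rule integral_nonneg_AE)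
  then show "0 \<le> KL_divergence (exp 1) M Q + ln (enn2real (\<integral>\<^sup>+x. ennreal (g x) \<partial>M))"
    using ih i2le unfolding c_def by linarith
  have "(\<integral>\<^sup>+x. ennreal (ln (g x)) \<partial>Q) \<le> (\<integral>\<^sup>+x. ennreal (h x) \<partial>Q)"
    using aeh by (intro nn_integral_mono_AE) (auto elim!: eventually_mono intro: ennreal_leI)
  also have "\<dots> = ennreal (\<integral>x. h x \<partial>Q)"
    by (rule nn_integral_eq_integral[OF inth aeh0])
  also have "\<dots> \<le> ennreal (KL_divergence (exp 1) M Q + ln (enn2real (\<integral>\<^sup>+x. ennreal (g x) \<partial>M)))"
    using ih i2le unfolding c_def by (intro ennreal_leI) linarith
  finally show "(\<integral>\<^sup>+x. ennreal (ln (g x)) \<partial>Q) \<le> ennreal (KL_divergence (exp 1) M Q + ln (enn2real (\<integral>\<^sup>+x. ennreal (g x) \<partial>M)))" .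
qed



lemma per_x:
  fixes \<pi> \<rho> Q :: "'t measure" and w l g :: "'t \<Rightarrow> real" and D :: "'t \<Rightarrow> ennreal"
    and \<alpha> \<epsilon> K R :: real
  assumes \<pi>: "prob_space \<pi>" and \<rho>: "prob_space \<rho>" and s\<rho>: "sets \<rho> = sets \<pi>"
   and ac\<rho>: "absolutely_continuous \<pi> \<rho>"
   and int\<rho>: "integrable \<rho> (\<lambda>\<theta>. ln (enn2real (RN_deriv \<pi> \<rho> \<theta>)))"
   and K: "KL_divergence (exp 1) \<pi> \<rho> \<le> K"
   and wm[measurable]: "w \<in> borel_measurable \<pi>" and w0: "\<And>\<theta>. \<theta> \<in> space \<pi> \<Longrightarrow> 0 \<le> w \<theta>"
   and wpos: "AE \<theta> in \<rho>. 0 < w \<theta>"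
   and lm[measurable]: "l \<in> borel_measurable \<pi>"
   and lw: "AE \<theta> in \<rho>. ln (w \<theta>) = - \<alpha> * l \<theta>"
   and intl: "integrable \<rho> l" and R: "(\<integral>\<theta>. l \<theta> \<partial>\<rho>) \<le> R"
   and gm[measurable]: "g \<in> borel_measurable \<pi>" and g1: "\<And>\<theta>. \<theta> \<in> space \<pi> \<Longrightarrow> 1 \<le> g \<theta>"
   and \<epsilon>: "0 < \<epsilon>" and G: "(\<integral>\<^sup>+\<theta>. ennreal (w \<theta> * g \<theta>) \<partial>\<pi>) \<le> ennreal (1 / \<epsilon>)"
   and \<alpha>: "0 < \<alpha>" "\<alpha> < 1"
   and Q: "prob_space Q"
   and Qmin: "kl_div Q (density \<pi> (\<lambda>\<theta>. ennreal (w \<theta>) / (\<integral>\<^sup>+\<gamma>. ennreal (w \<gamma>) \<partial>\<pi>)))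
             \<le> kl_div \<rho> (density \<pi> (\<lambda>\<theta>. ennreal (w \<theta>) / (\<integral>\<^sup>+\<gamma>. ennreal (w \<gamma>) \<partial>\<pi>)))"
   and goodae: "AE \<theta> in \<pi>. w \<theta> = 0 \<or> D \<theta> = ennreal (ln (g \<theta>) / (1 - \<alpha>))"
  shows "(\<integral>\<^sup>+\<theta>. D \<theta> \<partial>Q) \<le> ennreal ((K + \<alpha> * R - ln \<epsilon>) / (1 - \<alpha>))"
proof -
  interpret \<pi>: prob_space \<pi> by fact
  interpret \<rho>: prob_space \<rho> by fact
  interpret Q: prob_space Q by fact
  have sp\<rho>: "space \<rho> = space \<pi>" using s\<rho> by (rule sets_eq_imp_space_eq)
  have m\<rho>: "\<And>h::'t\<Rightarrow>real. h \<in> borel_measurable \<pi> \<Longrightarrow> h \<in> borel_measurable \<rho>"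
    by (simp add: measurable_def s\<rho> sp\<rho>)
  have m\<rho>e: "\<And>h::'t\<Rightarrow>ennreal. h \<in> borel_measurable \<pi> \<Longrightarrow> h \<in> borel_measurable \<rho>"
    by (simp add: measurable_def s\<rho> sp\<rho>)
  define Z where "Z = (\<integral>\<^sup>+\<gamma>. ennreal (w \<gamma>) \<partial>\<pi>)"
  define G' where "G' = (\<integral>\<^sup>+\<theta>. ennreal (w \<theta> * g \<theta>) \<partial>\<pi>)"
  have ZG: "Z \<le> G'" unfolding Z_def G'_def
  proof (intro nn_integral_mono ennreal_leI)
    fix \<theta> assume "\<theta> \<in> space \<pi>"
    then show "w \<theta> \<le> w \<theta> * g \<theta>" using mult_left_mono[OF g1 w0, of \<theta> \<theta>] by simp
  qed
  have Gfin: "G' < \<infinity>" using G unfolding G'_def by (simp add: le_less_trans)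
  have Z0: "Z \<noteq> 0"
  proof
    assume "Z = 0"
    then have "AE \<theta> in \<pi>. ennreal (w \<theta>) = 0" unfolding Z_def
      by (subst (asm) nn_integral_0_iff_AE) auto
    then have "AE \<theta> in \<rho>. ennreal (w \<theta>) = 0" by (rule absolutely_continuous_AE[OF s\<rho> ac\<rho>])
    with wpos have "AE \<theta> in \<rho>. False" by eventually_elim simp
    then show False by simp
  qed
  define z where "z = enn2real Z"
  have Zfin: "Z < \<infinity>" using ZG Gfin by (rule le_less_trans)
  have Zz: "ennreal z = Z" unfolding z_def using Zfin by (simp add: less_top)
  have z0: "0 < z" unfolding z_def using Zfin Z0
    by (simp add: enn2real_positive_iff zero_less_iff_neq_zero)
  define post where "post = density \<pi> (\<lambda>\<theta>. ennreal (w \<theta>) / Z)"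
  have post_eq: "post = density \<pi> (\<lambda>\<theta>. ennreal (w \<theta> / z))"
    unfolding post_def
  proof (intro density_cong)
    show "AE \<theta> in \<pi>. ennreal (w \<theta>) / Z = ennreal (w \<theta> / z)"
      using w0 z0 by (intro AE_I2) (simp add: Zz[symmetric] divide_ennreal)
  qed auto
  have spost: "sets post = sets \<pi>" unfolding post_eq by simp
  have sppost: "space post = space \<pi>" unfolding post_eq by simp
  have post_prob: "prob_space post"
  proof (rule prob_spaceI)
    have "emeasure post (space post) = (\<integral>\<^sup>+\<theta>. ennreal (w \<theta> / z) \<partial>\<pi>)"
      unfolding post_eq by (subst emeasure_density) (auto intro!: nn_integral_cong)
    also have "\<dots> = (\<integral>\<^sup>+\<theta>. ennreal (w \<theta>) / ennreal z \<partial>\<pi>)"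
      using w0 z0 by (intro nn_integral_cong) (simp add: divide_ennreal)
    also have "\<dots> = Z / ennreal z" unfolding Z_def by (rule nn_integral_divide) simp
    also have "\<dots> = 1" using z0 Z0 Gfin ZG by (simp add: Zz[symmetric] divide_ennreal)
    finally show "emeasure post (space post) = 1" .
  qed
  interpret post: prob_space post by fact
  have sigpost: "sigma_finite_measure post" by (rule post.sigma_finite_measure_axioms)
  define r0 where "r0 = RN_deriv \<pi> \<rho>"
  define f\<rho> where "f\<rho> \<theta> = enn2real (r0 \<theta>)" for \<theta>
  have r0m[measurable]: "r0 \<in> borel_measurable \<pi>" unfolding r0_def by simp
  have f\<rho>m[measurable]: "f\<rho> \<in> borel_measurable \<pi>" unfolding f\<rho>_def by simp
  obtain Dr where Dr: "Dr \<in> borel_measurable \<pi>" "AE x in \<pi>. r0 x = ennreal (Dr x)"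
    "AE x in \<rho>. 0 < Dr x" "\<And>x. 0 \<le> Dr x"
    using \<pi>.real_RN_deriv[OF \<rho>.finite_measure_axioms ac\<rho> s\<rho>] unfolding r0_def by blast
  have "AE x in \<rho>. r0 x = ennreal (Dr x)"
    using absolutely_continuous_AE[OF s\<rho> ac\<rho> Dr(2)] .
  then have f\<rho>pos: "AE x in \<rho>. 0 < f\<rho> x \<and> r0 x = ennreal (f\<rho> x)" using Dr(3)
    by eventually_elim (use Dr(4) in \<open>auto simp: f\<rho>_def\<close>)
  have dens\<rho>: "density \<pi> r0 = \<rho>" unfolding r0_def by (rule \<pi>.density_RN_deriv[OF ac\<rho> s\<rho>])
  define B where "B = {\<theta>\<in>space \<pi>. w \<theta> = 0}"
  have Bm[measurable]: "B \<in> sets \<pi>" unfolding B_def by measurable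
  have "emeasure \<rho> B = 0"
  proof -
    have "{\<theta>\<in>space \<rho>. \<not> 0 < w \<theta>} = B" unfolding B_def sp\<rho> using w0 by force
    then show ?thesis using wpos AE_iff_measurable[of B \<rho> "\<lambda>\<theta>. 0 < w \<theta>"] s\<rho> Bm by simp
  qed
  then have "(\<integral>\<^sup>+\<theta>. r0 \<theta> * indicator B \<theta> \<partial>\<pi>) = 0"
    using emeasure_density[OF r0m Bm] dens\<rho> by simp
  then have r0B: "AE \<theta> in \<pi>. r0 \<theta> * indicator B \<theta> = 0"
    by (subst (asm) nn_integral_0_iff_AE) auto
  define h where "h \<theta> = r0 \<theta> * ennreal (z / w \<theta>)" for \<theta>
  have hm[measurable]: "h \<in> borel_measurable \<pi>" unfolding h_def by measurable
  have hpost: "density post h = \<rho>"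
  proof -
    have "density post h = density \<pi> (\<lambda>\<theta>. ennreal (w \<theta> / z) * h \<theta>)"
      unfolding post_eq by (rule density_density_eq) auto
    also have "\<dots> = density \<pi> r0"
    proof (intro density_cong)
      show "AE \<theta> in \<pi>. ennreal (w \<theta> / z) * h \<theta> = r0 \<theta>"
        using r0B AE_space
      proof eventually_elim
        case (elim \<theta>)
        show ?case
        proof (cases "\<theta> \<in> B")
          case True
          then have "w \<theta> = 0" "r0 \<theta> = 0" using elim by (auto simp: B_def)
          then show ?thesis by (simp add: h_def)
        next
          case False
          then have wp: "0 < w \<theta>" using elim w0[of \<theta>] by (auto simp: B_def)
          have "ennreal (w \<theta> / z) * h \<theta> = r0 \<theta> * (ennreal (w \<theta> / z) * ennreal (z / w \<theta>))"
            by (simp add: h_def ac_simps)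
          also have "ennreal (w \<theta> / z) * ennreal (z / w \<theta>) = ennreal (w \<theta> / z * (z / w \<theta>))"
            using wp z0 by (intro ennreal_mult[symmetric]) auto
          also have "w \<theta> / z * (z / w \<theta>) = 1" using wp z0 by simp
          finally show ?thesis by simp
        qed
      qed
    qed auto
    finally show ?thesis using dens\<rho> by simp
  qed
  have hmp[measurable]: "h \<in> borel_measurable post" using hm by (simp add: measurable_def spost sppost)
  have acpost: "absolutely_continuous post \<rho>"
    using absolutely_continuousI_density[OF hmp] hpost by simp
  have s\<rho>post: "sets \<rho> = sets post" using s\<rho> spost by simp
  have "AE \<theta> in post. h \<theta> = RN_deriv post \<rho> \<theta>"
    by (rule post.RN_deriv_unique[OF hmp hpost])
  then have hRN: "AE \<theta> in \<rho>. h \<theta> = RN_deriv post \<rho> \<theta>"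
    by (rule absolutely_continuous_AE[OF s\<rho>post acpost])
  define L where "L \<theta> = ln (f\<rho> \<theta>) + ln z + \<alpha> * l \<theta>" for \<theta>
  have Lm[measurable]: "L \<in> borel_measurable \<pi>" unfolding L_def by measurable
  have aeL: "AE \<theta> in \<rho>. ln (enn2real (RN_deriv post \<rho> \<theta>)) = L \<theta>"
    using hRN f\<rho>pos wpos lw
  proof eventually_elim
    case (elim \<theta>)
    have "enn2real (RN_deriv post \<rho> \<theta>) = f\<rho> \<theta> * (z / w \<theta>)"
      using elim z0 by (simp add: h_def[symmetric] elim(1)[symmetric] h_def enn2real_mult)
    also have "ln \<dots> = ln (f\<rho> \<theta>) + ln z - ln (w \<theta>)"
      using elim z0 by (simp add: ln_mult ln_div)
    finally show ?case using elim by (simp add: L_def)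
  qed
  have intL: "integrable \<rho> L" unfolding L_def
    using int\<rho> intl by (auto simp: f\<rho>_def r0_def)
  have RNpm: "(\<lambda>\<theta>. ln (enn2real (RN_deriv post \<rho> \<theta>))) \<in> borel_measurable \<rho>"
    by (simp add: measurable_def s\<rho>post sets_eq_imp_space_eq[OF s\<rho>post])
  have int\<rho>post: "integrable \<rho> (\<lambda>\<theta>. ln (enn2real (RN_deriv post \<rho> \<theta>)))"
    using integrable_cong_AE[OF RNpm m\<rho>[OF Lm] aeL] intL by simp
  have KLpi: "KL_divergence (exp 1) \<pi> \<rho> = (\<integral>\<theta>. ln (f\<rho> \<theta>) \<partial>\<rho>)"
    by (simp add: KL_divergence_def entropy_density_def f\<rho>_def r0_def comp_def log_def)
  define KP where "KP = KL_divergence (exp 1) post \<rho>"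
  have KPeq: "KP = KL_divergence (exp 1) \<pi> \<rho> + ln z + \<alpha> * (\<integral>\<theta>. l \<theta> \<partial>\<rho>)"
  proof -
    have "KP = (\<integral>\<theta>. ln (enn2real (RN_deriv post \<rho> \<theta>)) \<partial>\<rho>)"
      by (simp add: KP_def KL_divergence_def entropy_density_def comp_def log_def)
    also have "\<dots> = (\<integral>\<theta>. L \<theta> \<partial>\<rho>)"
      by (rule integral_cong_AE[OF RNpm m\<rho>[OF Lm] aeL])
    also have "\<dots> = KL_divergence (exp 1) \<pi> \<rho> + ln z + \<alpha> * (\<integral>\<theta>. l \<theta> \<partial>\<rho>)"
      unfolding L_def KLpi using int\<rho> intl by (simp add: f\<rho>_def r0_def \<rho>.prob_space)
    finally show ?thesis .
  qed
  have kl\<rho>: "kl_div \<rho> post = ennreal KP"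
    unfolding kl_div_def KP_def using s\<rho>post acpost int\<rho>post by simp
  have KP0: "0 \<le> KP"
    using DV_bound(2)[OF post_prob \<rho>.prob_space_axioms s\<rho>post acpost int\<rho>post, of "\<lambda>_. 1"]
    by (simp add: KP_def post.emeasure_space_1)
  have Qmin': "kl_div Q post \<le> ennreal KP" using Qmin kl\<rho> unfolding post_def Z_def by simp
  have Qfin: "sets Q = sets post \<and> absolutely_continuous post Q
         \<and> integrable Q (\<lambda>x. ln (enn2real (RN_deriv post Q x)))"
  proof (rule ccontr)
    assume "\<not> ?thesis"
    then have "kl_div Q post = \<infinity>" unfolding kl_div_def by auto
    with Qmin' have "\<infinity> \<le> ennreal KP" by simp
    then show False by (simp add: top_unique)
  qed
  then have sQ: "sets Q = sets post" and acQ: "absolutely_continuous post Q"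
    and intQ: "integrable Q (\<lambda>x. ln (enn2real (RN_deriv post Q x)))" by auto
  define KQ where "KQ = KL_divergence (exp 1) post Q"
  have "ennreal KQ \<le> ennreal KP" using Qmin' Qfin unfolding kl_div_def KQ_def by simp
  then have KQP: "KQ \<le> KP" using KP0 by simp
  have gmp[measurable]: "g \<in> borel_measurable post" using gm by (simp add: measurable_def spost sppost)
  have g1p: "\<And>\<theta>. \<theta> \<in> space post \<Longrightarrow> 1 \<le> g \<theta>" using g1 sppost by simp
  have intg: "(\<integral>\<^sup>+\<theta>. ennreal (g \<theta>) \<partial>post) = G' / ennreal z"
  proof -
    have "(\<integral>\<^sup>+\<theta>. ennreal (g \<theta>) \<partial>post) = (\<integral>\<^sup>+\<theta>. ennreal (w \<theta> / z) * ennreal (g \<theta>) \<partial>\<pi>)"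
      unfolding post_eq by (rule nn_integral_density) auto
    also have "\<dots> = (\<integral>\<^sup>+\<theta>. ennreal (w \<theta> * g \<theta>) / ennreal z \<partial>\<pi>)"
    proof (intro nn_integral_cong)
      fix \<theta> assume t: "\<theta> \<in> space \<pi>"
      have "ennreal (w \<theta> / z) * ennreal (g \<theta>) = ennreal (w \<theta> / z * g \<theta>)"
        using w0[OF t] g1[OF t] z0 by (intro ennreal_mult[symmetric]) auto
      also have "\<dots> = ennreal (w \<theta> * g \<theta> / z)" by simp
      also have "\<dots> = ennreal (w \<theta> * g \<theta>) / ennreal z"
        using w0[OF t] g1[OF t] z0 by (intro divide_ennreal[symmetric]) auto
      finally show "ennreal (w \<theta> / z) * ennreal (g \<theta>) = ennreal (w \<theta> * g \<theta>) / ennreal z" .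
    qed
    also have "\<dots> = G' / ennreal z" unfolding G'_def by (rule nn_integral_divide) simp
    finally show ?thesis .
  qed
  define gg where "gg = enn2real G'"
  have Ggg: "G' = ennreal gg" unfolding gg_def using Gfin by (simp add: less_top)
  have gg0: "0 \<le> gg" by (simp add: gg_def)
  have "ennreal z \<le> ennreal gg" using ZG Zz Ggg by simp
  then have gg_pos: "z \<le> gg" using gg0 by simp
  have gg_le: "gg \<le> 1 / \<epsilon>" using G Ggg \<epsilon> unfolding G'_def by simp
  have intg': "(\<integral>\<^sup>+\<theta>. ennreal (g \<theta>) \<partial>post) = ennreal (gg / z)"
    using intg Ggg z0 gg_pos by (simp add: divide_ennreal)
  have gfin: "(\<integral>\<^sup>+\<theta>. ennreal (g \<theta>) \<partial>post) < \<infinity>" using intg' by simp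
  have DV1: "(\<integral>\<^sup>+\<theta>. ennreal (ln (g \<theta>)) \<partial>Q) \<le> ennreal (KQ + ln (gg / z))"
    using DV_bound(1)[OF post_prob Q sQ acQ intQ gmp g1p gfin] intg' z0 gg_pos
    by (simp add: KQ_def)
  have "ln (gg / z) = ln gg - ln z" using z0 gg_pos by (simp add: ln_div)
  also have "ln gg \<le> ln (1 / \<epsilon>)" using gg_le gg_pos z0 by (intro ln_mono) auto
  also have "ln (1 / \<epsilon>) = - ln \<epsilon>" using \<epsilon> by (simp add: ln_div)
  finally have lnc: "ln (gg / z) \<le> - ln \<epsilon> - ln z" by simp
  have "KQ + ln (gg / z) \<le> KL_divergence (exp 1) \<pi> \<rho> + \<alpha> * (\<integral>\<theta>. l \<theta> \<partial>\<rho>) - ln \<epsilon>"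
    using KQP KPeq lnc by linarith
  also have "\<dots> \<le> K + \<alpha> * R - ln \<epsilon>" using K R \<alpha> by (simp add: add_mono)
  finally have DV2: "(\<integral>\<^sup>+\<theta>. ennreal (ln (g \<theta>)) \<partial>Q) \<le> ennreal (K + \<alpha> * R - ln \<epsilon>)"
    using DV1 by (meson ennreal_leI order_trans)
  have acpostpi: "absolutely_continuous \<pi> post" unfolding post_eq
    by (rule absolutely_continuousI_density) simp
  have "AE \<theta> in post. w \<theta> = 0 \<or> D \<theta> = ennreal (ln (g \<theta>) / (1 - \<alpha>))"
    by (rule absolutely_continuous_AE[OF spost acpostpi goodae])
  moreover have "AE \<theta> in post. w \<theta> \<noteq> 0"
  proof -
    have "emeasure post B = (\<integral>\<^sup>+\<theta>. ennreal (w \<theta> / z) * indicator B \<theta> \<partial>\<pi>)"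
      unfolding post_eq by (rule emeasure_density) auto
    also have "\<dots> = (\<integral>\<^sup>+\<theta>. 0 \<partial>\<pi>)"
      by (intro nn_integral_cong) (auto simp: B_def indicator_def)
    finally have "emeasure post B = 0" by simp
    moreover have "{\<theta>\<in>space post. \<not> w \<theta> \<noteq> 0} = B" unfolding B_def sppost by auto
    ultimately show ?thesis using AE_iff_measurable[of B post "\<lambda>\<theta>. w \<theta> \<noteq> 0"] spost Bm by simp
  qed
  ultimately have "AE \<theta> in post. D \<theta> = ennreal (ln (g \<theta>) / (1 - \<alpha>))" by eventually_elim auto
  then have aeD: "AE \<theta> in Q. D \<theta> = ennreal (ln (g \<theta>) / (1 - \<alpha>))"
    by (rule absolutely_continuous_AE[OF sQ acQ])
  have spQ: "space Q = space \<pi>" using sQ spost sppost by (metis sets_eq_imp_space_eq)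
  have gmQ[measurable]: "g \<in> borel_measurable Q" using gm by (simp add: measurable_def sQ spost spQ)
  have "(\<integral>\<^sup>+\<theta>. D \<theta> \<partial>Q) = (\<integral>\<^sup>+\<theta>. ennreal (ln (g \<theta>) / (1 - \<alpha>)) \<partial>Q)"
    by (rule nn_integral_cong_AE[OF aeD])
  also have "\<dots> = (\<integral>\<^sup>+\<theta>. ennreal (ln (g \<theta>)) * ennreal (1 / (1 - \<alpha>)) \<partial>Q)"
  proof (intro nn_integral_cong)
    fix \<theta> assume "\<theta> \<in> space Q"
    then have "0 \<le> ln (g \<theta>)" using g1 spQ by simp
    then show "ennreal (ln (g \<theta>) / (1 - \<alpha>)) = ennreal (ln (g \<theta>)) * ennreal (1 / (1 - \<alpha>))"
      using \<alpha> by (simp add: ennreal_mult[symmetric] divide_inverse)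
  qed
  also have "\<dots> = (\<integral>\<^sup>+\<theta>. ennreal (ln (g \<theta>)) \<partial>Q) * ennreal (1 / (1 - \<alpha>))"
    by (rule nn_integral_multc) simp
  also have "\<dots> \<le> ennreal (K + \<alpha> * R - ln \<epsilon>) * ennreal (1 / (1 - \<alpha>))"
    by (rule mult_right_mono[OF DV2]) simp
  also have "\<dots> = ennreal ((K + \<alpha> * R - ln \<epsilon>) / (1 - \<alpha>))"
    using \<alpha> by (simp add: ennreal_mult''[symmetric] divide_inverse)
  finally show ?thesis .
qed



lemma l2_bound:
  fixes \<rho> :: "'t measure" and f m :: "'t \<Rightarrow> real" and v :: real
  assumes \<rho>: "prob_space \<rho>" and fm[measurable]: "f \<in> borel_measurable \<rho>" and intm: "integrable \<rho> m"
    and v0: "0 \<le> v" and V: "(\<integral>\<^sup>+\<theta>. ennreal ((f \<theta> - m \<theta>)\<^sup>2) \<partial>\<rho>) \<le> ennreal v"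
  shows "integrable \<rho> f" "(\<integral>\<theta>. f \<theta> \<partial>\<rho>) \<le> (\<integral>\<theta>. m \<theta> \<partial>\<rho>) + sqrt v"
proof -
  interpret \<rho>: prob_space \<rho> by fact
  have mm[measurable]: "m \<in> borel_measurable \<rho>" using intm by auto
  define d where "d \<theta> = f \<theta> - m \<theta>" for \<theta>
  have dm[measurable]: "d \<in> borel_measurable \<rho>" unfolding d_def by measurable
  have int2: "integrable \<rho> (\<lambda>\<theta>. (d \<theta>)\<^sup>2)"
    using V by (intro integrableI_nonneg) (auto simp: d_def le_less_trans)
  have intd: "integrable \<rho> d"
  proof (rule Bochner_Integration.integrable_bound)
    show "integrable \<rho> (\<lambda>\<theta>. 1 + (d \<theta>)\<^sup>2)" using int2 by simp
    show "AE \<theta> in \<rho>. norm (d \<theta>) \<le> norm (1 + (d \<theta>)\<^sup>2)"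
    proof (intro AE_I2)
      fix \<theta>
      have "0 \<le> (\<bar>d \<theta>\<bar> - 1/2)\<^sup>2" by simp
      then have "\<bar>d \<theta>\<bar> \<le> 1 + (d \<theta>)\<^sup>2"
        by (simp add: power2_eq_square algebra_simps abs_mult_self_eq)
      then show "norm (d \<theta>) \<le> norm (1 + (d \<theta>)\<^sup>2)" by simp
    qed
  qed simp
  show intf: "integrable \<rho> f"
  proof -
    have "integrable \<rho> (\<lambda>\<theta>. d \<theta> + m \<theta>)" using intd intm by simp
    then show ?thesis by (simp add: d_def)
  qed
  have "0 \<le> \<rho>.variance d" by (rule \<rho>.variance_positive)
  then have sq: "(\<integral>\<theta>. d \<theta> \<partial>\<rho>)\<^sup>2 \<le> (\<integral>\<theta>. (d \<theta>)\<^sup>2 \<partial>\<rho>)"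
    using \<rho>.variance_eq[OF intd int2] by simp
  have "ennreal (\<integral>\<theta>. (d \<theta>)\<^sup>2 \<partial>\<rho>) = (\<integral>\<^sup>+\<theta>. ennreal ((d \<theta>)\<^sup>2) \<partial>\<rho>)"
    by (rule nn_integral_eq_integral[symmetric]) (use int2 in auto)
  also have "\<dots> \<le> ennreal v" using V by (simp add: d_def)
  finally have "(\<integral>\<theta>. (d \<theta>)\<^sup>2 \<partial>\<rho>) \<le> v" using v0 by simp
  with sq have "(\<integral>\<theta>. d \<theta> \<partial>\<rho>)\<^sup>2 \<le> v" by linarith
  then have "(\<integral>\<theta>. d \<theta> \<partial>\<rho>) \<le> sqrt v" by (rule real_le_rsqrt)
  moreover have "(\<integral>\<theta>. f \<theta> \<partial>\<rho>) = (\<integral>\<theta>. d \<theta> \<partial>\<rho>) + (\<integral>\<theta>. m \<theta> \<partial>\<rho>)"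
  proof -
    have "(\<integral>\<theta>. f \<theta> \<partial>\<rho>) = (\<integral>\<theta>. d \<theta> + m \<theta> \<partial>\<rho>)" by (simp add: d_def)
    also have "\<dots> = (\<integral>\<theta>. d \<theta> \<partial>\<rho>) + (\<integral>\<theta>. m \<theta> \<partial>\<rho>)" using intd intm by simp
    finally show ?thesis .
  qed
  ultimately show "(\<integral>\<theta>. f \<theta> \<partial>\<rho>) \<le> (\<integral>\<theta>. m \<theta> \<partial>\<rho>) + sqrt v" by linarith
qed

lemma young0:
  fixes a b \<alpha> :: real
  assumes "0 \<le> a" "0 \<le> b" "0 < \<alpha>" "\<alpha> < 1"
  shows "a powr \<alpha> * b powr (1 - \<alpha>) \<le> \<alpha> * a + (1 - \<alpha>) * b"
proof (cases "a = 0 \<or> b = 0")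
  case True then show ?thesis using assms by auto
next
  case False then show ?thesis using assms by (intro Youngs_inequality_0) auto
qed



theorem mainTheorem2:
  fixes \<Theta> :: "(real ^ 'd) set"
    and \<theta>0 :: "real ^ 'd"
    and \<mu> :: "'x measure"
    and p :: "real ^ 'd \<Rightarrow> 'x \<Rightarrow> real"
    and \<pi> :: "(real ^ 'd) measure"
    and \<F> :: "(real ^ 'd) measure set"
    and n :: nat
    and \<epsilon>n :: real
    and \<rho>n :: "(real ^ 'd) measure"
    and \<alpha> \<epsilon> \<eta> :: real
    and Q :: "'x \<Rightarrow> (real ^ 'd) measure"
  assumes n_pos: "n \<ge> 1"
    and \<mu>_sf: "sigma_finite_measure \<mu>"
    and \<theta>0_in: "\<theta>0 \<in> \<Theta>"
    and p_meas: "(\<lambda>(\<theta>, x). p \<theta> x) \<in> borel_measurable (restrict_space borel \<Theta> \<Otimes>\<^sub>M \<mu>)"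
    and p_nonneg: "\<And>\<theta> x. \<theta> \<in> \<Theta> \<Longrightarrow> x \<in> space \<mu> \<Longrightarrow> 0 \<le> p \<theta> x"
    and p_dens: "\<And>\<theta>. \<theta> \<in> \<Theta> \<Longrightarrow> (\<integral>\<^sup>+ x. ennreal (p \<theta> x) \<partial>\<mu>) = 1"
    and \<pi>_prob: "prob_space \<pi>"
    and \<pi>_sets: "sets \<pi> = sets (restrict_space borel \<Theta>)"
    and \<F>_def: "\<And>\<rho>. \<rho> \<in> \<F> \<Longrightarrow> prob_space \<rho> \<and> sets \<rho> = sets \<pi> \<and> absolutely_continuous \<pi> \<rho>"
    and \<epsilon>n_pos: "\<epsilon>n > 0"
    and \<rho>n_in: "\<rho>n \<in> \<F>"
    and cond_i_fin: "AE \<theta> in \<rho>n. (AE x in density \<mu> (p \<theta>0). p \<theta> x > 0)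
                         \<and> integrable (density \<mu> (p \<theta>0)) (llr p \<theta> \<theta>0)"
    and cond_i_int: "integrable \<rho>n (\<lambda>\<theta>. \<integral> x. llr p \<theta> \<theta>0 x \<partial>density \<mu> (p \<theta>0))"
    and cond_i: "(\<integral> \<theta>. (\<integral> x. llr p \<theta> \<theta>0 x \<partial>density \<mu> (p \<theta>0)) \<partial>\<rho>n) \<le> real n * \<epsilon>n"
    and cond_ii: "(\<integral>\<^sup>+ \<theta>. (\<integral>\<^sup>+ x. ennreal ((llr p \<theta> \<theta>0 x
                      - (\<integral> y. llr p \<theta> \<theta>0 y \<partial>density \<mu> (p \<theta>0)))\<^sup>2) \<partial>density \<mu> (p \<theta>0)) \<partial>\<rho>n)
                  \<le> ennreal (real n * \<epsilon>n)"
    and cond_iii: "kl_div \<rho>n \<pi> \<le> ennreal (real n * \<epsilon>n)"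
    and \<alpha>_range: "0 < \<alpha>" "\<alpha> < 1"
    and \<epsilon>_range: "0 < \<epsilon>" "\<epsilon> < 1"
    and \<eta>_range: "0 < \<eta>" "\<eta> < 1"
    and Q_var: "AE x in density \<mu> (p \<theta>0). Q x \<in> \<F> \<and>
                  (\<forall>\<rho>\<in>\<F>. kl_div (Q x) (frac_post \<pi> p \<theta>0 \<alpha> x) \<le> kl_div \<rho> (frac_post \<pi> p \<theta>0 \<alpha> x))"
  shows "\<exists>A \<in> sets (density \<mu> (p \<theta>0)).
           measure (density \<mu> (p \<theta>0)) A \<ge> 1 - \<epsilon> - \<eta> \<and>
           (\<forall>x\<in>A. (\<integral>\<^sup>+ \<theta>. renyi_div \<mu> \<alpha> (p \<theta>) (p \<theta>0) \<partial>Q x)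
              \<le> ennreal (((\<alpha> + 1) * real n * \<epsilon>n + \<alpha> * sqrt (real n * \<epsilon>n / \<eta>) - ln \<epsilon>) / (1 - \<alpha>)))"
proof -
  define S where "S = restrict_space borel \<Theta>"
  have spS: "space S = \<Theta>" unfolding S_def by (simp add: space_restrict_space)
  interpret \<pi>: prob_space \<pi> by fact
  have sp\<pi>: "space \<pi> = \<Theta>" using sets_eq_imp_space_eq[OF \<pi>_sets] spS S_def by simp
  have s\<pi>S: "sets \<pi> = sets S" using \<pi>_sets S_def by simp
  interpret \<mu>: sigma_finite_measure \<mu> by fact
  have pm[measurable]: "(\<lambda>(\<theta>, x). p \<theta> x) \<in> borel_measurable (\<pi> \<Otimes>\<^sub>M \<mu>)"
    using p_meas unfolding measurable_def
    by (simp add: sets_pair_measure_cong[OF s\<pi>S refl] space_pair_measure sp\<pi> spS S_def[symmetric])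
  have pm2[measurable]: "(\<lambda>z. p (fst z) (snd z)) \<in> borel_measurable (\<pi> \<Otimes>\<^sub>M \<mu>)"
    using pm by (simp add: case_prod_beta')
  have p0m[measurable]: "p \<theta>0 \<in> borel_measurable \<mu>"
  proof -
    have "(\<lambda>x. (\<theta>0, x)) \<in> measurable \<mu> (\<pi> \<Otimes>\<^sub>M \<mu>)"
      using \<theta>0_in sp\<pi> by (intro measurable_Pair1') simp
    from measurable_comp[OF this pm2] show ?thesis by (simp add: comp_def)
  qed
  have p1m[measurable]: "(\<lambda>\<theta>. p \<theta> x) \<in> borel_measurable \<pi>" if "x \<in> space \<mu>" for x
  proof -
    have "(\<lambda>\<theta>. (\<theta>, x)) \<in> measurable \<pi> (\<pi> \<Otimes>\<^sub>M \<mu>)"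
      using that by (intro measurable_Pair2') simp
    from measurable_comp[OF this pm2] show ?thesis by (simp add: comp_def)
  qed
  define P0 where "P0 = density \<mu> (p \<theta>0)"
  have sP0: "sets P0 = sets \<mu>" and spP0: "space P0 = space \<mu>" unfolding P0_def by auto
  have P0_prob: "prob_space P0"
  proof (rule prob_spaceI)
    have "emeasure P0 (space P0) = (\<integral>\<^sup>+x. ennreal (p \<theta>0 x) \<partial>\<mu>)"
      unfolding P0_def by (subst emeasure_density) (auto intro!: nn_integral_cong)
    then show "emeasure P0 (space P0) = 1" using p_dens[OF \<theta>0_in] by simp
  qed
  interpret P0: prob_space P0 by fact
  have pxm[measurable]: "p \<theta> \<in> borel_measurable \<mu>" if "\<theta> \<in> \<Theta>" for \<theta>
  proof -
    have "(\<lambda>x. (\<theta>, x)) \<in> measurable \<mu> (\<pi> \<Otimes>\<^sub>M \<mu>)"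
      using that sp\<pi> by (intro measurable_Pair1') simp
    from measurable_comp[OF this pm2] show ?thesis by (simp add: comp_def)
  qed
  define w where "w \<theta> x = (p \<theta> x / p \<theta>0 x) powr \<alpha>" for \<theta> x
  define I where "I \<theta> = (\<integral>\<^sup>+x. ennreal (p \<theta> x powr \<alpha> * p \<theta>0 x powr (1 - \<alpha>)) \<partial>\<mu>)" for \<theta>
  have Im[measurable]: "I \<in> borel_measurable \<pi>" unfolding I_def by measurable
  have F1: "I \<theta> \<le> 1" if t: "\<theta> \<in> \<Theta>" for \<theta>
  proof -
    have "I \<theta> \<le> (\<integral>\<^sup>+x. ennreal (\<alpha> * p \<theta> x) + ennreal ((1 - \<alpha>) * p \<theta>0 x) \<partial>\<mu>)"
      unfolding I_def
    proof (intro nn_integral_mono)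
      fix x assume x: "x \<in> space \<mu>"
      show "ennreal (p \<theta> x powr \<alpha> * p \<theta>0 x powr (1 - \<alpha>)) \<le> ennreal (\<alpha> * p \<theta> x) + ennreal ((1 - \<alpha>) * p \<theta>0 x)"
      proof -
        have "ennreal (\<alpha> * p \<theta> x) + ennreal ((1 - \<alpha>) * p \<theta>0 x) = ennreal (\<alpha> * p \<theta> x + (1 - \<alpha>) * p \<theta>0 x)"
          using p_nonneg[OF t x] p_nonneg[OF \<theta>0_in x] \<alpha>_range by (intro ennreal_plus[symmetric]) auto
        then show ?thesis
          using young0[OF p_nonneg[OF t x] p_nonneg[OF \<theta>0_in x] \<alpha>_range] by (simp add: ennreal_leI)
      qed
    qed
    also have "\<dots> = (\<integral>\<^sup>+x. ennreal (\<alpha> * p \<theta> x) \<partial>\<mu>) + (\<integral>\<^sup>+x. ennreal ((1 - \<alpha>) * p \<theta>0 x) \<partial>\<mu>)"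
      using t by (intro nn_integral_add) auto
    also have "(\<integral>\<^sup>+x. ennreal (\<alpha> * p \<theta> x) \<partial>\<mu>) = ennreal \<alpha> * (\<integral>\<^sup>+x. ennreal (p \<theta> x) \<partial>\<mu>)"
      using t \<alpha>_range by (subst nn_integral_cmult[symmetric]) (auto simp: ennreal_mult')
    also have "(\<integral>\<^sup>+x. ennreal ((1 - \<alpha>) * p \<theta>0 x) \<partial>\<mu>) = ennreal (1 - \<alpha>) * (\<integral>\<^sup>+x. ennreal (p \<theta>0 x) \<partial>\<mu>)"
      using \<alpha>_range by (subst nn_integral_cmult[symmetric]) (auto simp: ennreal_mult')
    also have "ennreal \<alpha> * (\<integral>\<^sup>+x. ennreal (p \<theta> x) \<partial>\<mu>) + ennreal (1 - \<alpha>) * (\<integral>\<^sup>+x. ennreal (p \<theta>0 x) \<partial>\<mu>) = 1"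
      using p_dens[OF t] p_dens[OF \<theta>0_in] \<alpha>_range by (simp add: ennreal_plus[symmetric])
    finally show ?thesis .
  qed
  have F2: "(\<integral>\<^sup>+x. ennreal (w \<theta> x) \<partial>P0) = I \<theta>" if t: "\<theta> \<in> \<Theta>" for \<theta>
  proof -
    have "(\<integral>\<^sup>+x. ennreal (w \<theta> x) \<partial>P0) = (\<integral>\<^sup>+x. ennreal (p \<theta>0 x) * ennreal (w \<theta> x) \<partial>\<mu>)"
      unfolding P0_def using t by (subst nn_integral_density) (auto simp: w_def)
    also have "\<dots> = I \<theta>" unfolding I_def
    proof (intro nn_integral_cong)
      fix x assume x: "x \<in> space \<mu>"
      note a = p_nonneg[OF t x] and b = p_nonneg[OF \<theta>0_in x]
      show "ennreal (p \<theta>0 x) * ennreal (w \<theta> x) = ennreal (p \<theta> x powr \<alpha> * p \<theta>0 x powr (1 - \<alpha>))"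
      proof (cases "p \<theta>0 x = 0")
        case True then show ?thesis using \<alpha>_range by simp
      next
        case False
        then have b': "0 < p \<theta>0 x" using b by simp
        have "p \<theta>0 x * w \<theta> x = p \<theta> x powr \<alpha> * p \<theta>0 x powr (1 - \<alpha>)"
          using a b' by (simp add: w_def powr_divide powr_diff)
        then show ?thesis using b by (simp add: ennreal_mult[symmetric] w_def)
      qed
    qed
    finally show ?thesis .
  qed
  interpret \<pi>P0: pair_sigma_finite \<pi> P0
    unfolding pair_sigma_finite_def using \<pi>.sigma_finite_measure_axioms P0.sigma_finite_measure_axioms by simp
  have spairP: "sets (\<pi> \<Otimes>\<^sub>M P0) = sets (\<pi> \<Otimes>\<^sub>M \<mu>)" by (rule sets_pair_measure_cong[OF refl sP0])
  have spairP': "space (\<pi> \<Otimes>\<^sub>M P0) = space (\<pi> \<Otimes>\<^sub>M \<mu>)" by (rule sets_eq_imp_space_eq[OF spairP])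
  have pmP[measurable]: "(\<lambda>z. p (fst z) (snd z)) \<in> borel_measurable (\<pi> \<Otimes>\<^sub>M P0)"
    using pm2 by (simp add: measurable_def spairP spairP')
  have p0mP[measurable]: "p \<theta>0 \<in> borel_measurable P0" using p0m by (simp add: measurable_def sP0 spP0)
  have pxmP: "p \<theta> \<in> borel_measurable P0" if "\<theta> \<in> \<Theta>" for \<theta>
    using pxm[OF that] by (simp add: measurable_def sP0 spP0)
  have pmP'[measurable]: "(\<lambda>z. p (snd z) (fst z)) \<in> borel_measurable (P0 \<Otimes>\<^sub>M \<pi>)"
    using measurable_pair_swap[OF pmP] by (simp add: case_prod_beta')
  define g where "g \<theta> = (if I \<theta> = 0 then 1 else 1 / enn2real (I \<theta>))" for \<theta>
  have gm[measurable]: "g \<in> borel_measurable \<pi>" unfolding g_def by measurable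
  have Ifin: "I \<theta> = ennreal (enn2real (I \<theta>))" if "\<theta> \<in> \<Theta>" for \<theta>
  proof -
    have "I \<theta> \<noteq> \<top>" using F1[OF that] by (auto simp: top_unique)
    then show ?thesis by (simp add: ennreal_enn2real_if)
  qed
  have g1: "1 \<le> g \<theta>" if t: "\<theta> \<in> \<Theta>" for \<theta>
  proof (cases "I \<theta> = 0")
    case False
    have "enn2real (I \<theta>) \<le> 1" using F1[OF t] Ifin[OF t] by (metis ennreal_le_1)
    moreover have "0 < enn2real (I \<theta>)" using False Ifin[OF t] by (metis ennreal_0 enn2real_nonneg order_less_le)
    ultimately show ?thesis using False by (simp add: g_def)
  qed (simp add: g_def)
  have gI: "ennreal (g \<theta>) * I \<theta> \<le> 1" if t: "\<theta> \<in> \<Theta>" for \<theta>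
  proof (cases "I \<theta> = 0")
    case False
    have ip: "0 < enn2real (I \<theta>)" using False Ifin[OF t] by (metis ennreal_0 enn2real_nonneg order_less_le)
    have "ennreal (g \<theta>) * I \<theta> = ennreal (1 / enn2real (I \<theta>)) * ennreal (enn2real (I \<theta>))"
      using False Ifin[OF t] by (simp add: g_def)
    also have "\<dots> = ennreal (1 / enn2real (I \<theta>) * enn2real (I \<theta>))" using ip by (intro ennreal_mult[symmetric]) auto
    also have "\<dots> = 1" using ip by simp
    finally show ?thesis by simp
  qed simp
  define Gx where "Gx x = (\<integral>\<^sup>+\<theta>. ennreal (w \<theta> x * g \<theta>) \<partial>\<pi>)" for x
  have Gxm[measurable]: "Gx \<in> borel_measurable P0" unfolding Gx_def w_def by measurable
  have F3: "(\<integral>\<^sup>+x. Gx x \<partial>P0) \<le> 1"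
  proof -
    have "(\<integral>\<^sup>+x. Gx x \<partial>P0) = (\<integral>\<^sup>+\<theta>. (\<integral>\<^sup>+x. ennreal (w \<theta> x * g \<theta>) \<partial>P0) \<partial>\<pi>)"
      unfolding Gx_def by (rule \<pi>P0.Fubini') (simp add: w_def)
    also have "\<dots> \<le> (\<integral>\<^sup>+\<theta>. 1 \<partial>\<pi>)"
    proof (intro nn_integral_mono)
      fix \<theta> assume "\<theta> \<in> space \<pi>"
      then have t: "\<theta> \<in> \<Theta>" using sp\<pi> by simp
      note pxmP[OF t, measurable]
      have "(\<integral>\<^sup>+x. ennreal (w \<theta> x * g \<theta>) \<partial>P0) = (\<integral>\<^sup>+x. ennreal (g \<theta>) * ennreal (w \<theta> x) \<partial>P0)"
        using g1[OF t] by (intro nn_integral_cong) (simp add: ennreal_mult' mult.commute)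
      also have "\<dots> = ennreal (g \<theta>) * (\<integral>\<^sup>+x. ennreal (w \<theta> x) \<partial>P0)"
        unfolding w_def by (intro nn_integral_cmult) measurable
      also have "\<dots> = ennreal (g \<theta>) * I \<theta>" using F2[OF t] by simp
      finally show "(\<integral>\<^sup>+x. ennreal (w \<theta> x * g \<theta>) \<partial>P0) \<le> 1" using gI[OF t] by simp
    qed
    also have "\<dots> = 1" by (simp add: \<pi>.emeasure_space_1)
    finally show ?thesis .
  qed
  define B1 where "B1 = {x\<in>space P0. 1 \<le> ennreal \<epsilon> * Gx x}"
  have B1m: "B1 \<in> sets P0" unfolding B1_def by measurable
  have B1le: "emeasure P0 B1 \<le> ennreal \<epsilon>"
  proof -
    have "emeasure P0 B1 \<le> ennreal \<epsilon> * (\<integral>\<^sup>+x. Gx x * indicator (space P0) x \<partial>P0)"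
      unfolding B1_def by (rule nn_integral_Markov_inequality) auto
    also have "(\<integral>\<^sup>+x. Gx x * indicator (space P0) x \<partial>P0) = (\<integral>\<^sup>+x. Gx x \<partial>P0)"
      by (intro nn_integral_cong) simp
    also have "ennreal \<epsilon> * \<dots> \<le> ennreal \<epsilon> * 1" by (intro mult_left_mono F3) simp
    finally show ?thesis by simp
  qed
  have notB1: "Gx x \<le> ennreal (1 / \<epsilon>)" if "x \<in> space P0" "x \<notin> B1" for x
  proof -
    have lt: "ennreal \<epsilon> * Gx x < 1" using that unfolding B1_def by (simp add: not_le)
    then have "Gx x \<noteq> \<infinity>" using \<epsilon>_range by (auto simp: ennreal_mult_top)
    then obtain t where t: "Gx x = ennreal t" "0 \<le> t" by (cases "Gx x") auto
    then have "ennreal (\<epsilon> * t) < 1" using lt \<epsilon>_range by (simp add: ennreal_mult)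
    then have "\<epsilon> * t < 1" by (simp add: ennreal_less_iff)
    then have "t \<le> 1 / \<epsilon>" using \<epsilon>_range by (simp add: field_simps)
    then show ?thesis using t by (simp add: ennreal_leI)
  qed
  have mn0: "0 < real n * \<epsilon>n" using n_pos \<epsilon>n_pos by simp
  note cond_ii' = cond_ii[folded P0_def]
  have \<rho>F: "prob_space \<rho>n" "sets \<rho>n = sets \<pi>" "absolutely_continuous \<pi> \<rho>n" using \<F>_def[OF \<rho>n_in] by auto
  interpret \<rho>: prob_space \<rho>n by (rule \<rho>F(1))
  interpret \<rho>P0: pair_sigma_finite \<rho>n P0
    unfolding pair_sigma_finite_def using \<rho>.sigma_finite_measure_axioms P0.sigma_finite_measure_axioms by simp
  have sp\<rho>: "space \<rho>n = space \<pi>" using \<rho>F(2) by (rule sets_eq_imp_space_eq)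
  have spair\<rho>: "sets (\<rho>n \<Otimes>\<^sub>M P0) = sets (\<pi> \<Otimes>\<^sub>M P0)" by (rule sets_pair_measure_cong[OF \<rho>F(2) refl])
  have spair\<rho>': "space (\<rho>n \<Otimes>\<^sub>M P0) = space (\<pi> \<Otimes>\<^sub>M P0)" by (rule sets_eq_imp_space_eq[OF spair\<rho>])
  define m where "m \<theta> = (\<integral>y. llr p \<theta> \<theta>0 y \<partial>P0)" for \<theta>
  have mm[measurable]: "m \<in> borel_measurable \<pi>" unfolding m_def llr_def by measurable
  define V where "V x = (\<integral>\<^sup>+\<theta>. ennreal ((llr p \<theta> \<theta>0 x - m \<theta>)\<^sup>2) \<partial>\<rho>n)" for x
  have Hm\<pi>: "(\<lambda>(\<theta>, x). ennreal ((llr p \<theta> \<theta>0 x - m \<theta>)\<^sup>2)) \<in> borel_measurable (\<pi> \<Otimes>\<^sub>M P0)"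
    unfolding llr_def by measurable
  have Hm: "(\<lambda>(\<theta>, x). ennreal ((llr p \<theta> \<theta>0 x - m \<theta>)\<^sup>2)) \<in> borel_measurable (\<rho>n \<Otimes>\<^sub>M P0)"
    using Hm\<pi> by (simp add: measurable_def spair\<rho> spair\<rho>')
  have Vm[measurable]: "V \<in> borel_measurable P0"
  proof -
    have "(\<lambda>(x, \<theta>). ennreal ((llr p \<theta> \<theta>0 x - m \<theta>)\<^sup>2)) \<in> borel_measurable (P0 \<Otimes>\<^sub>M \<rho>n)"
      using measurable_pair_swap[OF Hm] by (simp add: case_prod_beta')
    then show ?thesis unfolding V_def by (rule \<rho>.borel_measurable_nn_integral)
  qed
  have F5: "(\<integral>\<^sup>+x. V x \<partial>P0) \<le> ennreal (real n * \<epsilon>n)"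
  proof -
    have "(\<integral>\<^sup>+x. V x \<partial>P0) = (\<integral>\<^sup>+\<theta>. (\<integral>\<^sup>+x. ennreal ((llr p \<theta> \<theta>0 x - m \<theta>)\<^sup>2) \<partial>P0) \<partial>\<rho>n)"
      unfolding V_def by (rule \<rho>P0.Fubini'[OF Hm])
    then show ?thesis using cond_ii' by (simp add: m_def)
  qed
  define B2 where "B2 = {x\<in>space P0. 1 \<le> ennreal (\<eta> / (real n * \<epsilon>n)) * V x}"
  have B2m: "B2 \<in> sets P0" unfolding B2_def by measurable
  have B2le: "emeasure P0 B2 \<le> ennreal \<eta>"
  proof -
    have "emeasure P0 B2 \<le> ennreal (\<eta> / (real n * \<epsilon>n)) * (\<integral>\<^sup>+x. V x * indicator (space P0) x \<partial>P0)"
      unfolding B2_def by (rule nn_integral_Markov_inequality) auto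
    also have "(\<integral>\<^sup>+x. V x * indicator (space P0) x \<partial>P0) = (\<integral>\<^sup>+x. V x \<partial>P0)"
      by (intro nn_integral_cong) simp
    also have "ennreal (\<eta> / (real n * \<epsilon>n)) * \<dots> \<le> ennreal (\<eta> / (real n * \<epsilon>n)) * ennreal (real n * \<epsilon>n)"
      by (intro mult_left_mono F5) simp
    also have "\<dots> = ennreal (\<eta> / (real n * \<epsilon>n) * (real n * \<epsilon>n))"
      by (rule ennreal_mult[symmetric]) (use mn0 \<eta>_range in auto)
    also have "\<eta> / (real n * \<epsilon>n) * (real n * \<epsilon>n) = \<eta>" using mn0 by (metis less_irrefl nonzero_eq_divide_eq)
    finally show ?thesis .
  qed
  have notB2: "V x \<le> ennreal (real n * \<epsilon>n / \<eta>)" if "x \<in> space P0" "x \<notin> B2" for x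
  proof -
    have lt: "ennreal (\<eta> / (real n * \<epsilon>n)) * V x < 1" using that unfolding B2_def by (simp add: not_le)
    then have "V x \<noteq> \<infinity>" using \<eta>_range mn0 n_pos \<epsilon>n_pos by (auto simp: ennreal_mult_top)
    then obtain t where t: "V x = ennreal t" "0 \<le> t" by (cases "V x") auto
    have "ennreal (\<eta> / (real n * \<epsilon>n) * t) = ennreal (\<eta> / (real n * \<epsilon>n)) * ennreal t"
      by (rule ennreal_mult) (use t \<eta>_range mn0 in auto)
    then have "ennreal (\<eta> / (real n * \<epsilon>n) * t) < 1" using lt t by simp
    then have "\<eta> / (real n * \<epsilon>n) * t < 1" by (simp add: ennreal_less_iff)
    then have "t \<le> real n * \<epsilon>n / \<eta>" using \<eta>_range mn0 by (simp add: field_simps)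
    then show ?thesis using t by (simp add: ennreal_leI)
  qed
  define W0 where "W0 x = (\<integral>\<^sup>+\<theta>. ennreal (w \<theta> x) * indicator {\<theta>\<in>space \<pi>. I \<theta> = 0} \<theta> \<partial>\<pi>)" for x
  have F4: "AE x in P0. W0 x = 0"
  proof -
    have Jm[measurable]: "{\<theta>\<in>space \<pi>. I \<theta> = 0} \<in> sets \<pi>" by measurable
    have W0m: "W0 \<in> borel_measurable P0" unfolding W0_def w_def by measurable
    have "(\<integral>\<^sup>+x. W0 x \<partial>P0) = (\<integral>\<^sup>+\<theta>. (\<integral>\<^sup>+x. ennreal (w \<theta> x) * indicator {\<theta>\<in>space \<pi>. I \<theta> = 0} \<theta> \<partial>P0) \<partial>\<pi>)"
      unfolding W0_def by (rule \<pi>P0.Fubini') (simp add: w_def)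
    also have "\<dots> = (\<integral>\<^sup>+\<theta>. 0 \<partial>\<pi>)"
    proof (intro nn_integral_cong)
      fix \<theta> assume "\<theta> \<in> space \<pi>"
      then have t: "\<theta> \<in> \<Theta>" using sp\<pi> by simp
      note pxmP[OF t, measurable]
      have "(\<integral>\<^sup>+x. ennreal (w \<theta> x) * indicator {\<theta>\<in>space \<pi>. I \<theta> = 0} \<theta> \<partial>P0)
          = (\<integral>\<^sup>+x. ennreal (w \<theta> x) \<partial>P0) * indicator {\<theta>\<in>space \<pi>. I \<theta> = 0} \<theta>"
        unfolding w_def by (intro nn_integral_multc) measurable
      also have "\<dots> = I \<theta> * indicator {\<theta>\<in>space \<pi>. I \<theta> = 0} \<theta>" using F2[OF t] by simp
      also have "\<dots> = 0" by (simp add: indicator_def)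
      finally show "(\<integral>\<^sup>+x. ennreal (w \<theta> x) * indicator {\<theta>\<in>space \<pi>. I \<theta> = 0} \<theta> \<partial>P0) = 0" .
    qed
    finally have "(\<integral>\<^sup>+x. W0 x \<partial>P0) = 0" by simp
    then show ?thesis using W0m by (subst (asm) nn_integral_0_iff_AE) auto
  qed
  have pm\<rho>[measurable]: "(\<lambda>z. p (fst z) (snd z)) \<in> borel_measurable (\<rho>n \<Otimes>\<^sub>M P0)"
    using pmP by (simp add: measurable_def spair\<rho> spair\<rho>')
  have F6: "AE x in P0. AE \<theta> in \<rho>n. 0 < p \<theta> x"
  proof -
    have "AE \<theta> in \<rho>n. AE x in P0. 0 < p \<theta> x"
      using cond_i_fin[folded P0_def] by eventually_elim auto
    moreover have "{z\<in>space (\<rho>n \<Otimes>\<^sub>M P0). 0 < p (fst z) (snd z)} \<in> sets (\<rho>n \<Otimes>\<^sub>M P0)"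
      by measurable
    ultimately show ?thesis using \<rho>P0.AE_commute[of "\<lambda>\<theta> x. 0 < p \<theta> x"] by simp
  qed
  have F7: "AE x in P0. 0 < p \<theta>0 x"
    unfolding P0_def by (subst AE_density) (auto simp: ennreal_less_zero_iff)
  have Qv: "AE x in P0. Q x \<in> \<F> \<and>
        (\<forall>\<rho>\<in>\<F>. kl_div (Q x) (frac_post \<pi> p \<theta>0 \<alpha> x) \<le> kl_div \<rho> (frac_post \<pi> p \<theta>0 \<alpha> x))"
    using Q_var[folded P0_def] .
  define Good where "Good x \<longleftrightarrow> 0 < p \<theta>0 x \<and> (AE \<theta> in \<rho>n. 0 < p \<theta> x) \<and> W0 x = 0 \<and> Q x \<in> \<F> \<and>
        (\<forall>\<rho>\<in>\<F>. kl_div (Q x) (frac_post \<pi> p \<theta>0 \<alpha> x) \<le> kl_div \<rho> (frac_post \<pi> p \<theta>0 \<alpha> x))" for x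
  have "AE x in P0. Good x" using F4 F6 F7 Qv unfolding Good_def by eventually_elim auto
  then obtain N where N: "{x\<in>space P0. \<not> Good x} \<subseteq> N" "emeasure P0 N = 0" "N \<in> sets P0"
    by (rule AE_E)
  define A where "A = space P0 - B1 - B2 - N"
  have Am: "A \<in> sets P0" unfolding A_def using B1m B2m N(3) by auto
  have mA: "measure P0 A \<ge> 1 - \<epsilon> - \<eta>"
  proof -
    have mB1: "measure P0 B1 \<le> \<epsilon>" using B1le \<epsilon>_range by (simp add: P0.emeasure_eq_measure)
    have mB2: "measure P0 B2 \<le> \<eta>" using B2le \<eta>_range by (simp add: P0.emeasure_eq_measure)
    have mN: "measure P0 N = 0" using N(2) by (simp add: P0.emeasure_eq_measure)
    have "space P0 - A \<subseteq> B1 \<union> B2 \<union> N" unfolding A_def by auto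
    then have "measure P0 (space P0 - A) \<le> measure P0 (B1 \<union> B2 \<union> N)"
      using B1m B2m N(3) by (intro P0.finite_measure_mono) auto
    also have "\<dots> \<le> measure P0 (B1 \<union> B2) + measure P0 N"
      using B1m B2m N(3) by (intro measure_Un_le) auto
    also have "measure P0 (B1 \<union> B2) \<le> measure P0 B1 + measure P0 B2"
      using B1m B2m by (intro measure_Un_le) auto
    finally have "measure P0 (space P0 - A) \<le> \<epsilon> + \<eta>" using mB1 mB2 mN by linarith
    moreover have "measure P0 (space P0 - A) = 1 - measure P0 A" using Am by (rule P0.prob_compl)
    ultimately show ?thesis by linarith
  qed
  have bound: "(\<integral>\<^sup>+\<theta>. renyi_div \<mu> \<alpha> (p \<theta>) (p \<theta>0) \<partial>Q x)
              \<le> ennreal (((\<alpha> + 1) * real n * \<epsilon>n + \<alpha> * sqrt (real n * \<epsilon>n / \<eta>) - ln \<epsilon>) / (1 - \<alpha>))"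
    if xA: "x \<in> A" for x
  proof -
    have xs: "x \<in> space P0" "x \<notin> B1" "x \<notin> B2" using xA unfolding A_def by auto
    have G: "Good x" using xA N(1) unfolding A_def by auto
    have x\<mu>: "x \<in> space \<mu>" using xs spP0 by simp
    note p1m[OF x\<mu>, measurable]
    have p0x: "0 < p \<theta>0 x" using G unfolding Good_def by simp
    have aep: "AE \<theta> in \<rho>n. 0 < p \<theta> x" using G unfolding Good_def by simp
    have W0x: "W0 x = 0" using G unfolding Good_def by simp
    have Qx: "Q x \<in> \<F>" and Qmin0: "\<forall>\<rho>\<in>\<F>. kl_div (Q x) (frac_post \<pi> p \<theta>0 \<alpha> x) \<le> kl_div \<rho> (frac_post \<pi> p \<theta>0 \<alpha> x)"
      using G unfolding Good_def by auto
    have klfin: "sets \<rho>n = sets \<pi> \<and> absolutely_continuous \<pi> \<rho>n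
         \<and> integrable \<rho>n (\<lambda>x. ln (enn2real (RN_deriv \<pi> \<rho>n x)))"
    proof (rule ccontr)
      assume "\<not> ?thesis"
      then have "kl_div \<rho>n \<pi> = \<infinity>" unfolding kl_div_def by auto
      with cond_iii have "\<infinity> \<le> ennreal (real n * \<epsilon>n)" by simp
      then show False by (simp add: top_unique)
    qed
    have int\<rho>: "integrable \<rho>n (\<lambda>x. ln (enn2real (RN_deriv \<pi> \<rho>n x)))" using klfin by simp
    have "ennreal (KL_divergence (exp 1) \<pi> \<rho>n) \<le> ennreal (real n * \<epsilon>n)"
      using cond_iii klfin unfolding kl_div_def by simp
    then have K: "KL_divergence (exp 1) \<pi> \<rho>n \<le> real n * \<epsilon>n" using mn0 by simp
    have wm: "(\<lambda>\<theta>. w \<theta> x) \<in> borel_measurable \<pi>" unfolding w_def by measurable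
    have w0: "\<And>\<theta>. \<theta> \<in> space \<pi> \<Longrightarrow> 0 \<le> w \<theta> x" by (simp add: w_def)
    have wpos: "AE \<theta> in \<rho>n. 0 < w \<theta> x" using aep
      by eventually_elim (use p0x in \<open>simp add: w_def\<close>)
    have lm: "(\<lambda>\<theta>. llr p \<theta> \<theta>0 x) \<in> borel_measurable \<pi>" unfolding llr_def by measurable
    have lw: "AE \<theta> in \<rho>n. ln (w \<theta> x) = - \<alpha> * llr p \<theta> \<theta>0 x" using aep
      by eventually_elim (use p0x in \<open>simp add: w_def llr_def ln_div algebra_simps\<close>)
    have lm\<rho>: "(\<lambda>\<theta>. llr p \<theta> \<theta>0 x) \<in> borel_measurable \<rho>n"
      using lm by (simp add: measurable_def \<rho>F(2) sp\<rho>)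
    have intm: "integrable \<rho>n m" using cond_i_int[folded P0_def] unfolding m_def .
    have Vx: "(\<integral>\<^sup>+\<theta>. ennreal ((llr p \<theta> \<theta>0 x - m \<theta>)\<^sup>2) \<partial>\<rho>n) \<le> ennreal (real n * \<epsilon>n / \<eta>)"
      using notB2[OF xs(1) xs(3)] unfolding V_def .
    have v0: "0 \<le> real n * \<epsilon>n / \<eta>" using mn0 \<eta>_range by simp
    note L2 = l2_bound[OF \<rho>F(1) lm\<rho> intm v0 Vx]
    have mle: "(\<integral>\<theta>. m \<theta> \<partial>\<rho>n) \<le> real n * \<epsilon>n" using cond_i[folded P0_def] unfolding m_def .
    have R: "(\<integral>\<theta>. llr p \<theta> \<theta>0 x \<partial>\<rho>n) \<le> real n * \<epsilon>n + sqrt (real n * \<epsilon>n / \<eta>)"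
      using L2(2) mle by linarith
    have g1': "\<And>\<theta>. \<theta> \<in> space \<pi> \<Longrightarrow> 1 \<le> g \<theta>" using g1 sp\<pi> by simp
    have Gx: "(\<integral>\<^sup>+\<theta>. ennreal (w \<theta> x * g \<theta>) \<partial>\<pi>) \<le> ennreal (1 / \<epsilon>)"
      using notB1[OF xs(1) xs(2)] unfolding Gx_def .
    have QF: "prob_space (Q x)" using \<F>_def[OF Qx] by simp
    have Qmin: "kl_div (Q x) (density \<pi> (\<lambda>\<theta>. ennreal (w \<theta> x) / (\<integral>\<^sup>+\<gamma>. ennreal (w \<gamma> x) \<partial>\<pi>)))
             \<le> kl_div \<rho>n (density \<pi> (\<lambda>\<theta>. ennreal (w \<theta> x) / (\<integral>\<^sup>+\<gamma>. ennreal (w \<gamma> x) \<partial>\<pi>)))"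
      using Qmin0 \<rho>n_in unfolding frac_post_def w_def by blast
    have goodae: "AE \<theta> in \<pi>. w \<theta> x = 0 \<or> renyi_div \<mu> \<alpha> (p \<theta>) (p \<theta>0) = ennreal (ln (g \<theta>) / (1 - \<alpha>))"
    proof -
      have Jm[measurable]: "{\<theta>\<in>space \<pi>. I \<theta> = 0} \<in> sets \<pi>" by measurable
      have "AE \<theta> in \<pi>. ennreal (w \<theta> x) * indicator {\<theta>\<in>space \<pi>. I \<theta> = 0} \<theta> = 0"
        using W0x unfolding W0_def by (subst (asm) nn_integral_0_iff_AE) (auto simp: w_def)
      then show ?thesis using AE_space
      proof eventually_elim
        case (elim \<theta>)
        then have t: "\<theta> \<in> \<Theta>" using sp\<pi> by simp
        show ?case
        proof (cases "I \<theta> = 0")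
          case True
          then have "ennreal (w \<theta> x) = 0" using elim by simp
          then have "w \<theta> x = 0" using w0[OF elim(2)] by simp
          then show ?thesis by simp
        next
          case False
          have ip: "0 < enn2real (I \<theta>)" using False Ifin[OF t] by (metis ennreal_0 enn2real_nonneg order_less_le)
          have "renyi_div \<mu> \<alpha> (p \<theta>) (p \<theta>0) = ennreal (ln (enn2real (I \<theta>)) / (\<alpha> - 1))"
            using False unfolding renyi_div_def Let_def I_def by simp
          also have "ln (enn2real (I \<theta>)) / (\<alpha> - 1) = ln (g \<theta>) / (1 - \<alpha>)"
            using False ip \<alpha>_range by (simp add: g_def ln_div field_simps)
          finally show ?thesis by simp
        qed
      qed
    qed
    have main: "(\<integral>\<^sup>+\<theta>. renyi_div \<mu> \<alpha> (p \<theta>) (p \<theta>0) \<partial>Q x)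
        \<le> ennreal ((real n * \<epsilon>n + \<alpha> * (real n * \<epsilon>n + sqrt (real n * \<epsilon>n / \<eta>)) - ln \<epsilon>) / (1 - \<alpha>))"
      by (rule per_x[OF \<pi>_prob \<rho>F(1) \<rho>F(2) \<rho>F(3) int\<rho> K wm w0 wpos lm lw L2(1) R gm g1'
            \<epsilon>_range(1) Gx \<alpha>_range QF Qmin goodae])
    have "real n * \<epsilon>n + \<alpha> * (real n * \<epsilon>n + sqrt (real n * \<epsilon>n / \<eta>)) - ln \<epsilon>
        = (\<alpha> + 1) * real n * \<epsilon>n + \<alpha> * sqrt (real n * \<epsilon>n / \<eta>) - ln \<epsilon>"
      by (simp add: algebra_simps)
    then show ?thesis using main by simp
  qed
  show ?thesis unfolding P0_def[symmetric] using Am mA bound by blast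
qed


end
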